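(* Let $N$ be an even positive integer and set Planck's constant $h=2\pi\hbar=1/N$. Let $F=(E_x+X^{-1/2}O_x)(B+Y^{-1}T)S$ be the operator described in the context. Then for every $m\in\mathbb{Z}$, $XF\Phi_m=F\Phi_m$ and $YF\Phi_m=F\Phi_m$; that is, $F$ maps the space $\mathcal{H}_\hbar(0)$ of (generalized) joint eigenvectors of $X$ and $Y$ with eigenvalue $1$ into itself.
   Context: $\widehat x$ is multiplication by $x$, $\widehat p=(\hbar/i)d/dx$. For real $s$, $X^{s}=e^{is\widehat{x}/\hbar}$, $Y^{s}=e^{is\widehat{p}/\hbar}$ (for $h=1/N$, $X=U^N$, $Y=V^N$ with $U=e^{2\pi i\widehat x}$, $V=e^{2\pi i\widehat p}$). $S=\exp\!\big(-\tfrac{i\log 2}{2\hbar}(\widehat{x}\widehat{p}+\widehat{p}\widehat{x})\big)$. $E_x$, $O_x$ are multiplication by the indicators of $[0,1)+2\mathbb{Z}$, $[1,2)+2\mathbb{Z}$; $B$, $T$ are the spectral projections of $\widehat p$ onto $[0,1/2)+\mathbb{Z}$, $[1/2,1)+\mathbb{Z}$. $\Phi_m=\Phi_m^{(0,0)}=N^{-1/2}\sum_{k\in\mathbb{Z}}\delta\big(x-\tfrac{m}{N}-k\big)$ (periodic $\delta$-comb). *)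

theory Defs
  imports Complex_Main
begin

text \<open>Model: generalized functions on the line that are (formal, locally finite)
  linear combinations of Dirac masses, represented by their coefficient function
  u :: real => complex, i.e. u stands for  sum_y u(y) delta(x - y).
  Planck's constant h = 2 pi hbar = 1/N.\<close>

type_synonym dm = "real \<Rightarrow> complex"

definition hbar :: "nat \<Rightarrow> real" where
  "hbar N = 1 / (2 * pi * real N)"

definition Xpow :: "nat \<Rightarrow> real \<Rightarrow> dm \<Rightarrow> dm" where
  "Xpow N s u = (\<lambda>y. cis (s * y / hbar N) * u y)"

text \<open>Y^s = exp(i s p / hbar) = exp(s d/dx): (Y^s f)(x) = f(x + s);
  on Dirac masses delta(x - y) maps to delta(x - (y - s)).\<close>
definition Ypow :: "real \<Rightarrow> dm \<Rightarrow> dm" where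
  "Ypow s u = (\<lambda>y. u (y + s))"

text \<open>S = exp(-(i log 2/(2 hbar))(xp+px)) acts as (S f)(x) = 2^(-1/2) f(x/2);
  on Dirac masses delta(x - y) maps to sqrt 2 * delta(x - 2y).\<close>
definition Sdil :: "dm \<Rightarrow> dm" where
  "Sdil u = (\<lambda>z. complex_of_real (sqrt 2) * u (z / 2))"

text \<open>E_x, O_x: multiplication by indicators of [0,1)+2Z and [1,2)+2Z.\<close>
definition Ex :: "dm \<Rightarrow> dm" where
  "Ex u = (\<lambda>y. if frac (y / 2) < 1 / 2 then u y else 0)"

definition Ox :: "dm \<Rightarrow> dm" where
  "Ox u = (\<lambda>y. if frac (y / 2) \<ge> 1 / 2 then u y else 0)"

text \<open>2-periodic Dirac combs with finitely many masses per period, and their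
  Fourier coefficients w.r.t. the modes exp(i pi j x):
  u = sum_j four2 u j * exp(i pi j x).\<close>
definition per2 :: "dm \<Rightarrow> bool" where
  "per2 u \<longleftrightarrow> (\<forall>y. u (y + 2) = u y)"

definition supp2 :: "dm \<Rightarrow> real set" where
  "supp2 u = {y. 0 \<le> y \<and> y < 2 \<and> u y \<noteq> 0}"

definition four2 :: "dm \<Rightarrow> int \<Rightarrow> complex" where
  "four2 u j = (1 / 2) * (\<Sum>y\<in>supp2 u. u y * cis (- pi * real_of_int j * y))"

text \<open>Eigenvalue of p = (hbar/i) d/dx on the mode exp(i pi j x).\<close>
definition p_eig :: "nat \<Rightarrow> int \<Rightarrow> real" where
  "p_eig N j = hbar N * pi * real_of_int j"

text \<open>Spectral projections B (p in [0,1/2)+Z) and T (p in [1/2,1)+Z), acting on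
  2-periodic Dirac combs (via their Fourier series).\<close>
definition Bproj :: "nat \<Rightarrow> dm \<Rightarrow> dm" where
  "Bproj N u = (THE v. per2 v \<and> finite (supp2 v) \<and>
      (\<forall>j. four2 v j = (if frac (p_eig N j) < 1 / 2 then four2 u j else 0)))"

definition Tproj :: "nat \<Rightarrow> dm \<Rightarrow> dm" where
  "Tproj N u = (THE v. per2 v \<and> finite (supp2 v) \<and>
      (\<forall>j. four2 v j = (if frac (p_eig N j) \<ge> 1 / 2 then four2 u j else 0)))"

definition Fop :: "nat \<Rightarrow> dm \<Rightarrow> dm" where
  "Fop N u = (let w = Sdil u;
                  v = (\<lambda>y. Bproj N w y + Ypow (-1) (Tproj N w) y)
              in (\<lambda>y. Ex v y + Xpow N (-1 / 2) (Ox v) y))"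

definition Phi :: "nat \<Rightarrow> int \<Rightarrow> dm" where
  "Phi N m = (\<lambda>y. if (\<exists>k::int. y = real_of_int m / real N + real_of_int k)
                  then complex_of_real (1 / sqrt (real N)) else 0)"

end

theory Submission
  imports Defs
begin

lemma cis_per: "a - b = 2 * pi * of_int k \<Longrightarrow> cis a = cis b"
proof -
  assume h: "a - b = 2 * pi * of_int k"
  have "a = b + 2 * pi * of_int k" using h by simp
  hence "cis a = cis (b + 2 * pi * of_int k)" by simp
  also have "\<dots> = cis b * cis (2 * pi * of_int k)" by (simp only: cis_mult)
  also have "cis (2 * pi * of_int k) = 1" by simp
  finally show ?thesis by simp
qed

lemma cis_one: "cis x = 1 \<Longrightarrow> \<exists>n::int. x = of_int n * 2 * pi"
proof -
  assume "cis x = 1"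
  hence "cos x = 1" by (metis Re_complex_of_real complex_eq_iff one_complex.sel(1) cis.sel(1))
  thus ?thesis by (simp add: cos_one_2pi_int)
qed

lemma cis_inj02: "0 \<le> y \<Longrightarrow> y < 2 \<Longrightarrow> 0 \<le> y' \<Longrightarrow> y' < 2 \<Longrightarrow> cis (- pi * y) = cis (- pi * y') \<Longrightarrow> y = y'"
proof -
  assume a: "0 \<le> y" "y < 2" "0 \<le> y'" "y' < 2" "cis (- pi * y) = cis (- pi * y')"
  hence "cis (- pi * y) / cis (- pi * y') = 1" by simp
  hence "cis (- pi * y - (- pi * y')) = 1" by (simp add: cis_divide)
  then obtain n :: int where n: "- pi * y - (- pi * y') = of_int n * 2 * pi" using cis_one by blast
  hence "pi * (y' - y) = pi * (of_int n * 2)" by (simp add: algebra_simps)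
  hence d: "y' - y = of_int n * 2" by simp
  have "real_of_int n < 1" "real_of_int n > -1" using a d by linarith+
  hence "n < 1" "n > -1" by linarith+
  hence "n = 0" by simp
  thus ?thesis using d by simp
qed

lemma vandermonde:
  fixes z c :: "'a \<Rightarrow> complex"
  assumes "finite S" "inj_on z S" "\<forall>n::nat. (\<Sum>y\<in>S. c y * z y ^ n) = 0"
  shows "\<forall>y\<in>S. c y = 0"
  using assms
proof (induction S arbitrary: c rule: finite_induct)
  case empty thus ?case by simp
next
  case (insert a S)
  define c' where "c' y = c y * (z y - z a)" for y
  have eq: "(\<Sum>y\<in>S. c y * z y ^ n) = - (c a * z a ^ n)" for n
    using insert.prems(2)[rule_format, of n] insert.hyps by (simp add: add_eq_0_iff)
  have "(\<Sum>y\<in>S. c' y * z y ^ n) = 0" for n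
  proof -
    have "(\<Sum>y\<in>S. c' y * z y ^ n) = (\<Sum>y\<in>S. c y * z y ^ Suc n) - z a * (\<Sum>y\<in>S. c y * z y ^ n)"
      by (simp add: c'_def sum_distrib_left sum_subtractf algebra_simps)
    also have "\<dots> = - (c a * z a ^ Suc n) - z a * (- (c a * z a ^ n))" by (simp only: eq)
    also have "\<dots> = 0" by (simp add: algebra_simps)
    finally show ?thesis .
  qed
  moreover have "inj_on z S" using insert.prems(1) by auto
  ultimately have "\<forall>y\<in>S. c' y = 0" using insert.IH by blast
  moreover have "\<forall>y\<in>S. z y \<noteq> z a" using insert.prems(1) insert.hyps by (auto simp: inj_on_def)
  ultimately have S0: "\<forall>y\<in>S. c y = 0" by (auto simp: c'_def)
  hence "c a = 0" using eq[of 0] by simp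
  thus ?case using S0 by simp
qed

lemma per2_int: "per2 u \<Longrightarrow> u (y + 2 * of_int k) = u y"
proof -
  assume p: "per2 u"
  have pos: "u (y + 2 * of_nat n) = u y" for y n
    by (induction n) (use p in \<open>auto simp: per2_def algebra_simps\<close>, metis add.assoc add.commute per2_def p)
  show ?thesis
  proof (cases "k \<ge> 0")
    case True thus ?thesis using pos[of y "nat k"] by simp
  next
    case False
    have "u (y + 2 * of_int k + 2 * of_nat (nat (-k))) = u (y + 2 * of_int k)" by (rule pos)
    thus ?thesis using False by simp
  qed
qed


lemma four2_ext: "finite D \<Longrightarrow> supp2 u \<subseteq> D \<Longrightarrow> D \<subseteq> {0..<2} \<Longrightarrow>
   four2 u j = (1/2) * (\<Sum>y\<in>D. u y * cis (- pi * real_of_int j * y))"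
  unfolding four2_def
  by (rule arg_cong[where f="\<lambda>x. (1/2) * x"], rule sum.mono_neutral_left) (auto simp: supp2_def)

lemma uniq:
  assumes pu: "per2 u" and pv: "per2 v" and fu: "finite (supp2 u)" and fv: "finite (supp2 v)"
    and eq: "\<forall>j. four2 u j = four2 v j"
  shows "u = v"
proof -
  define D where "D = supp2 u \<union> supp2 v"
  have fD: "finite D" using fu fv by (simp add: D_def)
  have D02: "D \<subseteq> {0..<2}" by (auto simp: D_def supp2_def)
  have sums: "(\<Sum>y\<in>D. (u y - v y) * cis (- pi * y) ^ n) = 0" for n :: nat
  proof -
    have "four2 u (int n) = four2 v (int n)" using eq by simp
    hence "(1/2) * (\<Sum>y\<in>D. u y * cis (- pi * real_of_int (int n) * y)) =
           (1/2) * (\<Sum>y\<in>D. v y * cis (- pi * real_of_int (int n) * y))"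
      using four2_ext[OF fD _ D02, of u] four2_ext[OF fD _ D02, of v] by (simp add: D_def)
    hence "(\<Sum>y\<in>D. u y * cis (- pi * real_of_int (int n) * y)) - (\<Sum>y\<in>D. v y * cis (- pi * real_of_int (int n) * y)) = 0"
      by simp
    moreover have "cis (- pi * real_of_int (int n) * y) = cis (- pi * y) ^ n" for y
      by (simp add: DeMoivre algebra_simps)
    ultimately show ?thesis by (simp add: sum_subtractf algebra_simps)
  qed
  have inj: "inj_on (\<lambda>y. cis (- pi * y)) D"
  proof (rule inj_onI)
    fix x y assume xy: "x \<in> D" "y \<in> D" "cis (- pi * x) = cis (- pi * y)"
    have "x \<in> {0..<2}" "y \<in> {0..<2}" using xy(1,2) D02 by blast+
    thus "x = y" using xy(3) cis_inj02[of x y] by simp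
  qed
  have Dz: "\<forall>y\<in>D. u y - v y = 0"
    by (rule vandermonde[OF fD inj allI[OF sums]])
  have main: "u y = v y" if y02: "0 \<le> y" "y < 2" for y
  proof (cases "y \<in> D")
    case True thus ?thesis using Dz by simp
  next
    case False
    hence "y \<notin> supp2 u" "y \<notin> supp2 v" by (simp_all add: D_def)
    hence "u y = 0" "v y = 0" using y02 by (simp_all add: supp2_def)
    thus ?thesis by simp
  qed
  show ?thesis
  proof
    fix y :: real
    define k where "k = \<lfloor>y / 2\<rfloor>"
    define y' where "y' = y - 2 * of_int k"
    have "0 \<le> y'" "y' < 2" unfolding y'_def k_def
      using floor_divide_lower[of 2 y] floor_divide_upper[of 2 y] by (auto simp: algebra_simps)
    hence "u y' = v y'" by (rule main)
    moreover have "y = y' + 2 * of_int k" by (simp add: y'_def)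
    ultimately show "u y = v y" using per2_int[OF pu] per2_int[OF pv] by metis
  qed
qed

lemma geom:
  fixes d :: int assumes N: "N > 0"
  shows "(\<Sum>k<2*N. cis (pi * real_of_int d / real N) ^ k) = (if int (2*N) dvd d then of_nat (2*N) else 0)"
proof (cases "int (2*N) dvd d")
  case True
  then obtain t where t: "d = int (2*N) * t" by blast
  have "cis (pi * real_of_int d / real N) = 1"
    using N by (simp add: t) (metis cis_multiple_2pi Ints_of_int mult.commute mult.left_commute)
  thus ?thesis using True by simp
next
  case False
  define x where "x = cis (pi * real_of_int d / real N)"
  have x1: "x \<noteq> 1"
  proof
    assume "x = 1"
    then obtain n :: int where n: "pi * real_of_int d / real N = of_int n * 2 * pi" using cis_one[of "pi * real_of_int d / real N"] x_def by auto
    hence "real_of_int d = of_int n * 2 * real N" using N by (simp add: field_simps)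
    hence "d = n * 2 * int N" by (metis of_int_eq_iff of_int_mult of_int_of_nat_eq of_int_numeral)
    thus False using False by (simp add: algebra_simps)
  qed
  have "x ^ (2*N) = cis (real (2*N) * (pi * real_of_int d / real N))" by (simp add: x_def DeMoivre)
  also have "real (2*N) * (pi * real_of_int d / real N) = 2 * pi * real_of_int d" using N by simp
  finally have "x ^ (2*N) = 1" by simp
  thus ?thesis using x1 False by (simp add: sum_gp_strict x_def[symmetric])
qed


definition inZN :: "nat \<Rightarrow> real \<Rightarrow> bool" where
  "inZN N y \<longleftrightarrow> (\<exists>k::int. y = of_int k / real N)"

definition C0 :: "nat \<Rightarrow> complex" where
  "C0 N = complex_of_real (sqrt 2 / (2 * sqrt (real N)))"

definition vL :: "nat \<Rightarrow> int \<Rightarrow> nat set \<Rightarrow> dm" where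
  "vL N m L = (\<lambda>y. if inZN N y then (C0 N / of_nat N) *
      (\<Sum>l\<in>L. cis (pi * real l * (y - 2 * real_of_int m / real N))) else 0)"

lemma dvd_iff_modnat:
  fixes j :: int assumes N: "N > (0::nat)" and l: "l < 2*N"
  shows "int (2*N) dvd (int l - j) \<longleftrightarrow> l = nat (j mod int (2*N))"
proof -
  have "int (2*N) dvd (int l - j) \<longleftrightarrow> int l mod int (2*N) = j mod int (2*N)"
    by (simp add: mod_eq_dvd_iff)
  also have "int l mod int (2*N) = int l" using l by simp
  also have "int l = j mod int (2*N) \<longleftrightarrow> l = nat (j mod int (2*N))" using N by auto
  finally show ?thesis .
qed

lemma vL_four2:
  assumes N: "N > 0" and L: "L \<subseteq> {..<2*N}"
  shows "four2 (vL N m L) j = (if nat (j mod int (2*N)) \<in> L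
           then C0 N * cis (- pi * real_of_int j * (2 * real_of_int m / real N)) else 0)"
proof -
  define a where "a = 2 * real_of_int m / real N"
  define K where "K = (\<lambda>k::nat. real k / real N) ` {..<2*N}"
  define r where "r = nat (j mod int (2*N))"
  have fK: "finite K" by (simp add: K_def)
  have K02: "K \<subseteq> {0..<2}" using N by (auto simp: K_def field_simps)
  have sK: "supp2 (vL N m L) \<subseteq> K"
  proof
    fix y assume "y \<in> supp2 (vL N m L)"
    hence y: "inZN N y" "0 \<le> y" "y < 2" by (auto simp: supp2_def vL_def split: if_splits)
    then obtain k :: int where k: "y = of_int k / real N" by (auto simp: inZN_def)
    have "0 \<le> k" using y(2) k N by (simp add: zero_le_divide_iff)
    moreover have "k < 2 * int N" using y(3) k N by (simp add: divide_less_eq)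
    ultimately show "y \<in> K" unfolding K_def using k
      by (intro image_eqI[of _ _ "nat k"]) auto
  qed
  have inj: "inj_on (\<lambda>k::nat. real k / real N) {..<2*N}" using N by (auto simp: inj_on_def)
  have trm: "cis (pi * real l * (real k / real N - a)) * cis (- pi * real_of_int j * (real k / real N))
      = cis (- pi * real l * a) * cis (pi * real_of_int (int l - j) / real N) ^ k" for l k
    by (simp add: cis_mult DeMoivre) (rule arg_cong[where f=cis], use N in \<open>simp add: field_simps\<close>)
  have "four2 (vL N m L) j = (1/2) * (\<Sum>y\<in>K. vL N m L y * cis (- pi * real_of_int j * y))"
    by (rule four2_ext[OF fK sK K02])
  also have "\<dots> = (1/2) * (\<Sum>k<2*N. vL N m L (real k / real N) * cis (- pi * real_of_int j * (real k / real N)))"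
    unfolding K_def by (simp add: sum.reindex[OF inj])
  also have "\<dots> = (1/2) * (\<Sum>k<2*N. (C0 N / of_nat N) * (\<Sum>l\<in>L. cis (pi * real l * (real k / real N - a))
       * cis (- pi * real_of_int j * (real k / real N))))"
  proof -
    have "inZN N (real k / real N)" for k unfolding inZN_def by (intro exI[of _ "int k"]) simp
    thus ?thesis by (simp add: vL_def a_def sum_distrib_right mult.assoc)
  qed
  also have "\<dots> = (1/2) * (C0 N / of_nat N) * (\<Sum>l\<in>L. cis (- pi * real l * a) *
        (\<Sum>k<2*N. cis (pi * real_of_int (int l - j) / real N) ^ k))"
  proof -
    have "(\<Sum>k<2*N. (C0 N / of_nat N) * (\<Sum>l\<in>L. cis (pi * real l * (real k / real N - a))
       * cis (- pi * real_of_int j * (real k / real N)))) =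
      (C0 N / of_nat N) * (\<Sum>k<2*N. \<Sum>l\<in>L. cis (- pi * real l * a) * cis (pi * real_of_int (int l - j) / real N) ^ k)"
      unfolding trm by (simp only: sum_distrib_left)
    also have "(\<Sum>k<2*N. \<Sum>l\<in>L. cis (- pi * real l * a) * cis (pi * real_of_int (int l - j) / real N) ^ k)
       = (\<Sum>l\<in>L. \<Sum>k<2*N. cis (- pi * real l * a) * cis (pi * real_of_int (int l - j) / real N) ^ k)"
      by (rule sum.swap)
    also have "\<dots> = (\<Sum>l\<in>L. cis (- pi * real l * a) * (\<Sum>k<2*N. cis (pi * real_of_int (int l - j) / real N) ^ k))"
      by (simp only: sum_distrib_left)
    finally show ?thesis by (simp only: mult.assoc)
  qed
  also have "\<dots> = (1/2) * (C0 N / of_nat N) * (\<Sum>l\<in>L. if l = r then cis (- pi * real l * a) * of_nat (2*N) else 0)"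
  proof -
    have "l \<in> L \<Longrightarrow> cis (- pi * real l * a) * (\<Sum>k<2*N. cis (pi * real_of_int (int l - j) / real N) ^ k)
       = (if l = r then cis (- pi * real l * a) * of_nat (2*N) else 0)" for l
    proof -
      assume lL: "l \<in> L"
      have g: "(\<Sum>k<2*N. cis (pi * real_of_int (int l - j) / real N) ^ k)
           = (if int (2*N) dvd (int l - j) then of_nat (2*N) else 0)" by (rule geom[OF N])
      have "int (2*N) dvd (int l - j) \<longleftrightarrow> l = r"
        using dvd_iff_modnat[OF N, of l j] L lL by (auto simp: r_def)
      thus ?thesis by (simp only: g) simp
    qed
    thus ?thesis by (intro arg_cong[where f="\<lambda>x. (1/2) * (C0 N / of_nat N) * x"] sum.cong) auto
  qed
  also have "\<dots> = (if r \<in> L then C0 N * cis (- pi * real r * a) else 0)"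
    using N finite_subset[OF L] by (simp add: sum.delta split: if_splits) 
  also have "cis (- pi * real r * a) = cis (- pi * real_of_int j * a)"
  proof (rule cis_per[of _ _ "2 * m * (j div int (2*N))"])
    have "real r = real_of_int (j mod int (2*N))" using N by (simp add: r_def)
    also have "\<dots> = real_of_int j - real_of_int (int (2*N)) * real_of_int (j div int (2*N))"
      by (metis minus_div_mult_eq_mod mult.commute of_int_diff of_int_mult)
    finally have hr: "real_of_int j = real r + 2 * real N * real_of_int (j div int (2*N))" by simp
    show "- pi * real r * a - - pi * real_of_int j * a = 2 * pi * real_of_int (2 * m * (j div int (2 * N)))"
      unfolding hr a_def using N by (simp add: field_simps)
  qed
  finally show ?thesis by (simp add: a_def r_def)
qed


lemma inZN_shift: "N > 0 \<Longrightarrow> inZN N (y + of_int t) \<longleftrightarrow> inZN N y"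
proof
  assume N: "N > 0" and "inZN N (y + of_int t)"
  then obtain k where "y + of_int t = of_int k / real N" by (auto simp: inZN_def)
  hence "y = of_int (k - t * int N) / real N" using N by (simp add: field_simps)
  thus "inZN N y" unfolding inZN_def by blast
next
  assume N: "N > 0" and "inZN N y"
  then obtain k where "y = of_int k / real N" by (auto simp: inZN_def)
  hence "y + of_int t = of_int (k + t * int N) / real N" using N by (simp add: field_simps)
  thus "inZN N (y + of_int t)" unfolding inZN_def by blast
qed

lemma supp2_vL: assumes N: "N > 0" shows "supp2 (vL N m L) \<subseteq> (\<lambda>k::nat. real k / real N) ` {..<2*N}"
proof
  fix y assume "y \<in> supp2 (vL N m L)"
  hence y: "inZN N y" "0 \<le> y" "y < 2" by (auto simp: supp2_def vL_def split: if_splits)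
  then obtain k :: int where k: "y = of_int k / real N" by (auto simp: inZN_def)
  have "0 \<le> k" using y(2) k N by (simp add: zero_le_divide_iff)
  moreover have "k < 2 * int N" using y(3) k N by (simp add: divide_less_eq)
  ultimately have e: "y = real (nat k) / real N" "nat k \<in> {..<2*N}" using k by (simp_all add: nat_less_iff)
  show "y \<in> (\<lambda>k::nat. real k / real N) ` {..<2*N}" by (rule image_eqI[of y "\<lambda>k::nat. real k / real N" "nat k" "{..<2*N}", OF e(1) e(2)])
qed

lemma finite_vL: assumes N: "N > 0" shows "finite (supp2 (vL N m L))"
  by (rule finite_subset[OF supp2_vL[OF N]]) simp

lemma per2_vL: assumes N: "N > 0" shows "per2 (vL N m L)"
  unfolding per2_def
proof
  fix y
  have i: "inZN N (y + 2) \<longleftrightarrow> inZN N y" using inZN_shift[OF N, of y 2] by simp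
  have "cis (pi * real l * (y + 2 - 2 * real_of_int m / real N)) = cis (pi * real l * (y - 2 * real_of_int m / real N))" for l
    by (rule cis_per[of _ _ "int l"]) (simp add: algebra_simps)
  thus "vL N m L (y + 2) = vL N m L y" using i by (simp add: vL_def)
qed

lemma four2_w:
  assumes N: "N > 0"
  shows "per2 (Sdil (Phi N m))" "finite (supp2 (Sdil (Phi N m)))"
    "four2 (Sdil (Phi N m)) j = C0 N * cis (- pi * real_of_int j * (2 * real_of_int m / real N))"
proof -
  define q where "q = real_of_int m / real N"
  define y0 where "y0 = 2 * (q - of_int \<lfloor>q\<rfloor>)"
  have w: "Sdil (Phi N m) z = (if \<exists>k::int. z / 2 = q + of_int k then complex_of_real (sqrt 2 / sqrt (real N)) else 0)" for z
    by (simp add: Sdil_def Phi_def q_def)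
  show "per2 (Sdil (Phi N m))" unfolding per2_def
  proof
    fix y
    have "(\<exists>k::int. (y + 2) / 2 = q + of_int k) \<longleftrightarrow> (\<exists>k::int. y / 2 = q + of_int k)"
    proof
      assume "\<exists>k::int. (y + 2) / 2 = q + of_int k"
      then obtain k :: int where "(y + 2) / 2 = q + of_int k" by blast
      hence "y / 2 = q + of_int (k - 1)" by (simp add: field_simps)
      thus "\<exists>k::int. y / 2 = q + of_int k" by blast
    next
      assume "\<exists>k::int. y / 2 = q + of_int k"
      then obtain k :: int where "y / 2 = q + of_int k" by blast
      hence "(y + 2) / 2 = q + of_int (k + 1)" by (simp add: field_simps)
      thus "\<exists>k::int. (y + 2) / 2 = q + of_int k" by blast
    qed
    thus "Sdil (Phi N m) (y + 2) = Sdil (Phi N m) y" by (simp only: w)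
  qed
  have S: "supp2 (Sdil (Phi N m)) = {y0}"
  proof (intro set_eqI iffI)
    fix z assume "z \<in> supp2 (Sdil (Phi N m))"
    hence z: "0 \<le> z" "z < 2" "\<exists>k::int. z / 2 = q + of_int k" by (auto simp: supp2_def w split: if_splits)
    then obtain k :: int where k: "z / 2 = q + of_int k" by blast
    have "\<lfloor>q + of_int k\<rfloor> = 0" using z k by (intro floor_unique) auto
    hence "\<lfloor>q\<rfloor> = - k" by simp
    thus "z \<in> {y0}" using k by (simp add: y0_def field_simps)
  next
    fix z assume "z \<in> {y0}"
    hence z: "z = y0" by simp
    have "0 \<le> y0" "y0 < 2" using frac_ge_0[of q] frac_lt_1[of q] unfolding y0_def frac_def by auto
    moreover have ex: "\<exists>k::int. y0 / 2 = q + of_int k" by (rule exI[of _ "- \<lfloor>q\<rfloor>"]) (simp add: y0_def)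
    ultimately show "z \<in> supp2 (Sdil (Phi N m))" using z N by (simp add: supp2_def w)
  qed
  thus "finite (supp2 (Sdil (Phi N m)))" by simp
  have "\<exists>k::int. y0 / 2 = q + of_int k" by (rule exI[of _ "- \<lfloor>q\<rfloor>"]) (simp add: y0_def)
  hence wy0: "Sdil (Phi N m) y0 = complex_of_real (sqrt 2 / sqrt (real N))" by (simp add: w)
  have c: "cis (- pi * real_of_int j * y0) = cis (- pi * real_of_int j * (2 * real_of_int m / real N))"
    by (rule cis_per[of _ _ "j * \<lfloor>q\<rfloor>"]) (simp add: y0_def q_def algebra_simps)
  show "four2 (Sdil (Phi N m)) j = C0 N * cis (- pi * real_of_int j * (2 * real_of_int m / real N))"
    unfolding four2_def S using c wy0 by (simp add: C0_def)
qed

lemma frac_p: assumes N: "N > 0" shows "frac (p_eig N j) = real_of_int (j mod int (2*N)) / real (2*N)"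
proof -
  have pe: "p_eig N j = real_of_int j / real (2*N)" by (simp add: p_eig_def hbar_def)
  have "real_of_int j = real_of_int (j div int (2*N)) * real (2*N) + real_of_int (j mod int (2*N))"
    by (metis div_mult_mod_eq of_int_add of_int_mult of_int_of_nat_eq)
  hence e1: "real_of_int j / real (2*N) - real_of_int (j mod int (2*N)) / real (2*N) = real_of_int (j div int (2*N))"
    using N by (simp add: field_simps)
  moreover have "0 \<le> real_of_int (j mod int (2*N)) / real (2*N)" using N by simp
  moreover have "real_of_int (j mod int (2*N)) / real (2*N) < 1"
  proof -
    have "j mod int (2*N) < int (2*N)" using N by simp
    hence "real_of_int (j mod int (2*N)) < real_of_int (int (2*N))" by (simp only: of_int_less_iff)
    hence "real_of_int (j mod int (2*N)) < real (2*N)" by simp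
    thus ?thesis using N by (simp add: divide_less_eq)
  qed
  ultimately show ?thesis unfolding pe frac_unique_iff
    by (intro conjI) (simp only: e1 Ints_of_int)+
qed

lemma proj_gen:
  assumes N: "N > 0" and L: "L \<subseteq> {..<2*N}"
    and cond: "\<And>j. P j \<longleftrightarrow> nat (j mod int (2*N)) \<in> L"
  shows "(THE v. per2 v \<and> finite (supp2 v) \<and>
      (\<forall>j. four2 v j = (if P j then four2 (Sdil (Phi N m)) j else 0))) = vL N m L"
proof -
  have f: "four2 (vL N m L) j = (if P j then four2 (Sdil (Phi N m)) j else 0)" for j
    unfolding vL_four2[OF N L] four2_w(3)[OF N] cond ..
  have PL: "per2 (vL N m L) \<and> finite (supp2 (vL N m L)) \<and>
      (\<forall>j. four2 (vL N m L) j = (if P j then four2 (Sdil (Phi N m)) j else 0))"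
    by (intro conjI allI per2_vL[OF N] finite_vL[OF N] f)
  show ?thesis
  proof (rule the_equality)
    show "per2 (vL N m L) \<and> finite (supp2 (vL N m L)) \<and>
      (\<forall>j. four2 (vL N m L) j = (if P j then four2 (Sdil (Phi N m)) j else 0))" by (rule PL)
    fix v assume v: "per2 v \<and> finite (supp2 v) \<and>
      (\<forall>j. four2 v j = (if P j then four2 (Sdil (Phi N m)) j else 0))"
    have eqs: "\<forall>j. four2 v j = four2 (vL N m L) j" using v f by simp
    have pv: "per2 v" and fv: "finite (supp2 v)" using v by simp_all
    show "v = vL N m L" by (rule uniq[OF pv per2_vL[OF N] fv finite_vL[OF N] eqs])
  qed
qed

lemma Bproj_eq: assumes N: "N > 0" shows "Bproj N (Sdil (Phi N m)) = vL N m {..<N}"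
proof -
  have cond: "frac (p_eig N j) < 1 / 2 \<longleftrightarrow> nat (j mod int (2*N)) \<in> {..<N}" for j
  proof -
    have b: "j mod int (2*N) < int (2*N)" "0 \<le> j mod int (2*N)" using N by simp_all
    have "frac (p_eig N j) < 1 / 2 \<longleftrightarrow> real_of_int (j mod int (2*N)) < real N"
      using N by (simp add: frac_p field_simps)
    also have "\<dots> \<longleftrightarrow> j mod int (2*N) < int N" by (metis of_int_less_iff of_int_of_nat_eq)
    also have "\<dots> \<longleftrightarrow> nat (j mod int (2*N)) \<in> {..<N}" using b by auto
    finally show ?thesis .
  qed
  show ?thesis unfolding Bproj_def by (rule proj_gen[OF N _ cond]) auto
qed

lemma Tproj_eq: assumes N: "N > 0" shows "Tproj N (Sdil (Phi N m)) = vL N m {N..<2*N}"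
proof -
  have cond: "frac (p_eig N j) \<ge> 1 / 2 \<longleftrightarrow> nat (j mod int (2*N)) \<in> {N..<2*N}" for j
  proof -
    have b: "j mod int (2*N) < int (2*N)" "0 \<le> j mod int (2*N)" using N by simp_all
    have "frac (p_eig N j) \<ge> 1 / 2 \<longleftrightarrow> real N \<le> real_of_int (j mod int (2*N))"
      using N by (simp add: frac_p field_simps)
    also have "\<dots> \<longleftrightarrow> int N \<le> j mod int (2*N)" by (metis of_int_le_iff of_int_of_nat_eq)
    also have "\<dots> \<longleftrightarrow> nat (j mod int (2*N)) \<in> {N..<2*N}" using b by auto
    finally show ?thesis .
  qed
  show ?thesis unfolding Tproj_def by (rule proj_gen[OF N _ cond]) auto
qed


lemma vT_form: "vL N m {N..<2*N} y = (if inZN N y then (C0 N / of_nat N) *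
      (\<Sum>l<N. cis (pi * real (l + N) * (y - 2 * real_of_int m / real N))) else 0)"
proof -
  have "{N..<2*N} = (\<lambda>l. l + N) ` {..<N}"
  proof (rule set_eqI)
    fix x show "x \<in> {N..<2*N} \<longleftrightarrow> x \<in> (\<lambda>l. l + N) ` {..<N}"
    proof
      assume "x \<in> {N..<2*N}" thus "x \<in> (\<lambda>l. l + N) ` {..<N}" by (intro image_eqI[of _ _ "x - N"]) auto
    qed auto
  qed
  moreover have "inj_on (\<lambda>l. l + N) {..<N}" by (auto simp: inj_on_def)
  ultimately have "(\<Sum>l\<in>{N..<2*N}. cis (pi * real l * (y - 2 * real_of_int m / real N))) =
     (\<Sum>l<N. cis (pi * real (l + N) * (y - 2 * real_of_int m / real N)))"
    by (simp add: sum.reindex)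
  thus ?thesis by (simp add: vL_def)
qed

lemma vB_form: "vL N m {..<N} y = (if inZN N y then (C0 N / of_nat N) *
      (\<Sum>l<N. cis (pi * real l * (y - 2 * real_of_int m / real N))) else 0)"
  by (simp add: vL_def)

context
  fixes N h :: nat and m k :: int and y a :: real
  assumes N: "N > 0" and h: "N = 2 * h" and y: "y = of_int k / real N" and a: "a = 2 * real_of_int m / real N"
begin

lemma t1: "cis (- pi * real N * (y + 1)) * cis (pi * real l * (y + 1 - a)) = cis (pi * real (l + N) * (y - 1 - a))"
  unfolding cis_mult by (rule cis_per[of _ _ "int l - k + m"]) (use N in \<open>simp add: y a field_simps\<close>)

lemma t2: "cis (- pi * real N * (y + 1)) * cis (pi * real (l + N) * (y - a)) = cis (pi * real l * (y - a))"
  unfolding cis_mult by (rule cis_per[of _ _ "- int h - m"]) (use N in \<open>simp add: y a h field_simps\<close>)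

lemma t3: "cis (pi * real l * (y + 1 - a)) = cis (- pi * real N * y) * cis (pi * real (l + N) * (y - 1 - a))"
  unfolding cis_mult by (rule cis_per[of _ _ "int l + int h + m"]) (use N in \<open>simp add: y a h field_simps\<close>)

lemma t4: "cis (pi * real (l + N) * (y - a)) = cis (- pi * real N * y) * cis (pi * real l * (y - a))"
  unfolding cis_mult by (rule cis_per[of _ _ "k - m"]) (use N in \<open>simp add: y a field_simps\<close>)

end


lemma frac_half: fixes y :: real
  shows "frac ((y + 1) / 2) = (if frac (y / 2) < 1/2 then frac (y / 2) + 1/2 else frac (y / 2) - 1/2)"
proof -
  have e: "(y + 1) / 2 = y / 2 + 1/2" by simp
  have h12: "frac (1/2 :: real) = 1/2" by (simp add: frac_unique_iff)
  have "frac (y / 2 + 1/2) = (if frac (y/2) + 1/2 < 1 then frac (y/2) + 1/2 else frac (y/2) + 1/2 - 1)"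
    using frac_add[of "y/2" "1/2"] h12 by simp
  thus ?thesis unfolding e by auto
qed

theorem mainTheorem3:
  fixes N :: nat
  assumes "N > 0" and "even N"
  shows "\<forall>m::int. Xpow N 1 (Fop N (Phi N m)) = Fop N (Phi N m)
                 \<and> Ypow 1 (Fop N (Phi N m)) = Fop N (Phi N m)"
proof
  fix m :: int
  have N: "N > 0" using assms(1) .
  obtain h where h: "N = 2 * h" using assms(2) by blast
  define a where "a = 2 * real_of_int m / real N"
  define C where "C = C0 N / of_nat N"
  define vB where "vB = vL N m {..<N}"
  define vT where "vT = vL N m {N..<2*N}"
  define v where "v y = vB y + vT (y - 1)" for y
  have vBf: "vB y = (if inZN N y then C * (\<Sum>l<N. cis (pi * real l * (y - a))) else 0)" for y
    unfolding vB_def vB_form C_def a_def ..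
  have vTf: "vT y = (if inZN N y then C * (\<Sum>l<N. cis (pi * real (l + N) * (y - a))) else 0)" for y
    unfolding vT_def vT_form C_def a_def ..
  have hb: "x / hbar N = 2 * pi * real N * x" for x using N by (simp add: hbar_def)
  have F: "Fop N (Phi N m) y = (if frac (y/2) < 1/2 then v y else 0) +
      cis (- pi * real N * y) * (if frac (y/2) \<ge> 1/2 then v y else 0)" for y
    by (simp add: Fop_def Let_def Bproj_eq[OF N] Tproj_eq[OF N] Ex_def Ox_def Xpow_def Ypow_def hb
        v_def vB_def vT_def mult.assoc)
  have izs: "inZN N (y + 1) \<longleftrightarrow> inZN N y" "inZN N (y - 1) \<longleftrightarrow> inZN N y" for y
    using inZN_shift[OF N, of y 1] inZN_shift[OF N, of y "-1"] by simp_all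
  have v0: "\<not> inZN N y \<Longrightarrow> v y = 0" for y by (simp add: v_def vBf vTf izs)
  have F0: "\<not> inZN N y \<Longrightarrow> Fop N (Phi N m) y = 0" for y by (simp add: F v0)
  show "Xpow N 1 (Fop N (Phi N m)) = Fop N (Phi N m) \<and> Ypow 1 (Fop N (Phi N m)) = Fop N (Phi N m)"
  proof
    show "Xpow N 1 (Fop N (Phi N m)) = Fop N (Phi N m)"
    proof
      fix y
      show "Xpow N 1 (Fop N (Phi N m)) y = Fop N (Phi N m) y"
      proof (cases "inZN N y")
        case True
        then obtain k :: int where k: "y = of_int k / real N" by (auto simp: inZN_def)
        have "1 * y / hbar N = 2 * pi * of_int k" using N by (simp add: hb k)
        hence "cis (1 * y / hbar N) = 1" by simp
        thus ?thesis by (simp add: Xpow_def)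
      next
        case False thus ?thesis by (simp add: Xpow_def F0)
      qed
    qed
    show "Ypow 1 (Fop N (Phi N m)) = Fop N (Phi N m)"
    proof
      fix y
      show "Ypow 1 (Fop N (Phi N m)) y = Fop N (Phi N m) y"
      proof (cases "inZN N y")
        case False thus ?thesis by (simp add: Ypow_def F0 izs)
      next
        case True
        then obtain k :: int where k: "y = of_int k / real N" by (auto simp: inZN_def)
        have i1: "inZN N (y + 1)" "inZN N (y - 1)" using True izs by auto
        have ym: "y + 1 - 1 = y" by simp
        have e1: "cis (- pi * real N * (y + 1)) * vB (y + 1) = vT (y - 1)"
        proof -
          have "cis (- pi * real N * (y + 1)) * vB (y + 1) = C * (\<Sum>l<N. cis (- pi * real N * (y + 1)) * cis (pi * real l * (y + 1 - a)))"
            using i1 by (simp add: vBf sum_distrib_left mult.left_commute)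
          also have "\<dots> = C * (\<Sum>l<N. cis (pi * real (l + N) * (y - 1 - a)))"
            using t1[OF N h k a_def] by simp
          finally show ?thesis using i1 by (simp add: vTf)
        qed
        have e2: "cis (- pi * real N * (y + 1)) * vT y = vB y"
        proof -
          have "cis (- pi * real N * (y + 1)) * vT y = C * (\<Sum>l<N. cis (- pi * real N * (y + 1)) * cis (pi * real (l + N) * (y - a)))"
            using True by (simp add: vTf sum_distrib_left mult.left_commute)
          also have "\<dots> = C * (\<Sum>l<N. cis (pi * real l * (y - a)))"
            using t2[OF N h k a_def] by simp
          finally show ?thesis using True by (simp add: vBf)
        qed
        have e3: "vB (y + 1) = cis (- pi * real N * y) * vT (y - 1)"
        proof -
          have "cis (- pi * real N * y) * vT (y - 1) = C * (\<Sum>l<N. cis (- pi * real N * y) * cis (pi * real (l + N) * (y - 1 - a)))"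
            using i1 by (simp add: vTf sum_distrib_left mult.left_commute)
          also have "\<dots> = C * (\<Sum>l<N. cis (pi * real l * (y + 1 - a)))"
            using t3[OF N h k a_def] by simp
          finally show ?thesis using i1 by (simp add: vBf)
        qed
        have e4: "vT y = cis (- pi * real N * y) * vB y"
        proof -
          have "cis (- pi * real N * y) * vB y = C * (\<Sum>l<N. cis (- pi * real N * y) * cis (pi * real l * (y - a)))"
            using True by (simp add: vBf sum_distrib_left mult.left_commute)
          also have "\<dots> = C * (\<Sum>l<N. cis (pi * real (l + N) * (y - a)))"
            using t4[OF N h k a_def] by simp
          finally show ?thesis using True by (simp add: vTf)
        qed
        have vy1: "v (y + 1) = vB (y + 1) + vT y" by (simp add: v_def)
        have vy: "v y = vB y + vT (y - 1)" by (simp add: v_def)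
        show ?thesis
        proof (cases "frac (y/2) < 1/2")
          case True
          hence "frac ((y + 1) / 2) \<ge> 1/2" by (simp add: frac_half)
          hence "Fop N (Phi N m) (y + 1) = cis (- pi * real N * (y + 1)) * v (y + 1)" by (simp add: F)
          also have "\<dots> = vT (y - 1) + vB y" by (simp only: vy1 distrib_left[of "cis (- pi * real N * (y + 1))"] e1 e2)
          also have "\<dots> = Fop N (Phi N m) y" using True by (simp add: F v_def)
          finally show ?thesis by (simp add: Ypow_def)
        next
          case False
          hence "\<not> frac ((y + 1) / 2) \<ge> 1/2" "frac ((y + 1) / 2) < 1/2"
            using frac_lt_1[of "y/2"] by (auto simp: frac_half)
          hence "Fop N (Phi N m) (y + 1) = v (y + 1)" by (simp add: F)
          also have "\<dots> = cis (- pi * real N * y) * v y" by (simp only: vy1 vy e3 e4 distrib_left[of "cis (- pi * real N * y)"]) (rule add.commute)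
          also have "\<dots> = Fop N (Phi N m) y" using False by (simp add: F)
          finally show ?thesis by (simp add: Ypow_def)
        qed
      qed
    qed
  qed
qed

end
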